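(* Let $m\ge3$, $C$ a set of $m$ candidates, $T$ the set of all $m!$ strict rankings of $C$, $w=(w_1,\dots,w_m)$ with $1=w_1\ge\cdots\ge w_m=0$, $\bar w=(w_1+\cdots+w_m)/m$, and $\sigma_t(\alpha)=w_i$ where $i$ is the position of $\alpha$ in $t\in T$. Let $(N_t)_{t\in T}$ be nonnegative integers with $\sum_tN_t=n$ and $|\alpha|=\sum_tN_t\sigma_t(\alpha)$. Suppose $|a|>|\alpha|$ for all $\alpha\ne a$, and $b\ne a$ satisfies $|b|\ge|\alpha|$ for all $\alpha\ne a$. Let $T_b$ be the set of types ranking $b$ first, $T_i$ ($1\le i\le m-1$) the set of types ranking $b$ in position $i$ and $a$ in position $i+1$, and $T_{ba}=\bigcup_{i=1}^{m-1}T_i$. Suppose nonnegative reals $z_1,\dots,z_{m-1}$ satisfy $$\sum_{i=1}^{m-1}z_i(1-w_i+w_{i+1})\ge|a|-|b|,\qquad \sum_{i=1}^{m-1}z_i(1-w_i)\ge n\bar w-|b|.$$ Then there exist reals $x_t\ge0$ ($t\in T_{ba}$) and $y_t\ge0$ ($t\in T_b$) with $\sum_{t\in T_i}x_t=z_i$ for each $i=1,\dots,m-1$, $\sum_{t\in T_b}y_t=\sum_{t\in T_{ba}}x_t$, and $$\sum_{t\in T_b}y_t(1-\sigma_t(\alpha))-\sum_{t\in T_{ba}}x_t(\sigma_t(b)-\sigma_t(\alpha))\ge|\alpha|-|b|\quad\text{for all }\alpha\ne b.$$ *)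

theory Defs
  imports Complex_Main
begin

(* A strict ranking ("type") of the candidate set C is a list enumerating C without repetition;
   the first element of the list is ranked first. *)
definition rankings :: "'c set \<Rightarrow> 'c list set" where
  "rankings C = {t. distinct t \<and> set t = C}"

(* 1-based position of candidate \<alpha> in ranking t *)
definition pos :: "'c list \<Rightarrow> 'c \<Rightarrow> nat" where
  "pos t \<alpha> = Suc (THE i. i < length t \<and> t ! i = \<alpha>)"

definition sigma :: "(nat \<Rightarrow> real) \<Rightarrow> 'c list \<Rightarrow> 'c \<Rightarrow> real" where
  "sigma w t \<alpha> = w (pos t \<alpha>)"

definition score :: "'c set \<Rightarrow> (nat \<Rightarrow> real) \<Rightarrow> ('c list \<Rightarrow> nat) \<Rightarrow> 'c \<Rightarrow> real" where
  "score C w N \<alpha> = (\<Sum>t\<in>rankings C. real (N t) * sigma w t \<alpha>)"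

end

theory Submission
  imports Defs
begin


lemma pos_nth: assumes "distinct t" "k < length t" shows "pos t (t ! k) = Suc k"
  unfolding pos_def
proof (rule arg_cong[where f=Suc], rule the_equality)
  show "k < length t \<and> t ! k = t ! k" using assms by simp
next
  fix i assume "i < length t \<and> t ! i = t ! k"
  then show "i = k" using assms nth_eq_iff_index_eq by blast
qed

lemma rank_len: "t \<in> rankings C \<Longrightarrow> length t = card C"
  by (auto simp: rankings_def distinct_card)

lemma pos_in: assumes "t \<in> rankings C" "c \<in> C"
  shows "pos t c \<in> {1..card C} \<and> t ! (pos t c - 1) = c"
proof -
  from assms obtain k where k: "k < length t" "t ! k = c"
    by (auto simp: rankings_def in_set_conv_nth)
  have d: "distinct t" using assms by (simp add: rankings_def)
  have "pos t c = Suc k" using pos_nth[OF d k(1)] k(2) by simp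
  then show ?thesis using k rank_len[OF assms(1)] by auto
qed

lemma pos_bij: assumes "t \<in> rankings C" shows "bij_betw (pos t) C {1..card C}"
proof -
  have inj: "inj_on (pos t) C"
  proof (rule inj_onI)
    fix x y assume "x \<in> C" "y \<in> C" "pos t x = pos t y"
    then show "x = y" using pos_in[OF assms] by metis
  qed
  have "pos t ` C = {1..card C}"
  proof
    show "pos t ` C \<subseteq> {1..card C}" using pos_in[OF assms] by auto
  next
    show "{1..card C} \<subseteq> pos t ` C"
    proof
      fix j assume j: "j \<in> {1..card C}"
      then have k: "j - 1 < length t" using rank_len[OF assms] by auto
      have d: "distinct t" "set t = C" using assms by (auto simp: rankings_def)
      have "pos t (t ! (j - 1)) = j" using pos_nth[OF d(1) k] j by simp
      moreover have "t ! (j - 1) \<in> C" using k d by auto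
      ultimately show "j \<in> pos t ` C" by force
    qed
  qed
  then show ?thesis using inj by (simp add: bij_betw_def)
qed

lemma mk_rank: assumes "finite C" "bij_betw p C {1..card C}"
  shows "\<exists>t\<in>rankings C. \<forall>c\<in>C. pos t c = p c"
proof -
  define m where "m = card C"
  define g where "g = (\<lambda>k. inv_into C p (Suc k))"
  define t where "t = map g [0..<m]"
  have bi: "bij_betw (inv_into C p) {1..m} C" using bij_betw_inv_into assms(2) m_def by blast
  have ii: "inj_on (inv_into C p) {1..m}" using bi by (simp add: bij_betw_def)
  have "inj_on g {0..<m}"
  proof (rule inj_onI)
    fix x y assume xy: "x \<in> {0..<m}" "y \<in> {0..<m}" "g x = g y"
    have "Suc x \<in> {1..m}" "Suc y \<in> {1..m}" using xy(1,2) by auto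
    then have "Suc x = Suc y" using ii xy(3) unfolding g_def inj_on_def by blast
    then show "x = y" by simp
  qed
  then have dist: "distinct t" unfolding t_def by (simp add: distinct_map)
  have "set t = g ` {0..<m}" by (simp add: t_def)
  also have "\<dots> = inv_into C p ` (Suc ` {0..<m})" unfolding g_def image_image by (rule refl)
  also have "Suc ` {0..<m} = {1..m}" by (simp add: image_Suc_atLeastLessThan atLeastLessThanSuc_atLeastAtMost)
  also have "inv_into C p ` {1..m} = C" using bi by (simp add: bij_betw_def)
  finally have st: "set t = C" .
  have "\<forall>c\<in>C. pos t c = p c"
  proof
    fix c assume c: "c \<in> C"
    have pc: "p c \<in> {1..m}" using assms(2) c m_def by (auto simp: bij_betw_def)
    have k: "p c - 1 < length t" using pc by (auto simp: t_def)
    have "t ! (p c - 1) = g (p c - 1)" using k by (simp add: t_def)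
    also have "\<dots> = inv_into C p (p c)" using pc by (simp add: g_def)
    also have "\<dots> = c" using assms(2) c by (simp add: bij_betw_def inv_into_f_f)
    finally have "pos t c = Suc (p c - 1)" using pos_nth[OF dist k] by simp
    then show "pos t c = p c" using pc by simp
  qed
  moreover have "t \<in> rankings C" using dist st by (simp add: rankings_def)
  ultimately show ?thesis by blast
qed




lemma bij_extend: assumes "finite C" "D \<subseteq> C" "inj_on q D" "q ` D \<subseteq> {1..card C}"
  shows "\<exists>p. bij_betw p C {1..card C} \<and> (\<forall>x\<in>D. p x = q x)"
proof -
  have fD: "finite D" using assms(1,2) finite_subset by blast
  have c1: "card (C - D) = card C - card D" using assms(1,2) fD by (simp add: card_Diff_subset)
  have c2: "card ({1..card C} - q ` D) = card C - card D"
    using assms(3,4) by (simp add: card_Diff_subset card_image fD)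
  obtain h where h: "bij_betw h (C - D) ({1..card C} - q ` D)"
    using finite_same_card_bij[of "C - D" "{1..card C} - q ` D"] c1 c2 assms(1) by auto
  define p where "p = (\<lambda>x. if x \<in> D then q x else h x)"
  have b1: "bij_betw p D (q ` D)"
    using assms(3) by (simp add: bij_betw_def inj_on_def p_def image_def)
  have b2: "bij_betw p (C - D) ({1..card C} - q ` D)"
    using h bij_betw_cong[of "C - D" p h] by (simp add: p_def)
  have "bij_betw p (D \<union> (C - D)) (q ` D \<union> ({1..card C} - q ` D))"
    by (rule bij_betw_combine[OF b1 b2]) auto
  moreover have "D \<union> (C - D) = C" using assms(2) by auto
  moreover have "q ` D \<union> ({1..card C} - q ` D) = {1..card C}" using assms(4) by auto
  ultimately show ?thesis by (auto simp: p_def)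
qed

lemma bij_modify: assumes "bij_betw p C S" "D \<subseteq> C" "inj_on q D" "q ` D = p ` D"
  shows "bij_betw (\<lambda>x. if x \<in> D then q x else p x) C S"
proof -
  define p' where "p' = (\<lambda>x. if x \<in> D then q x else p x)"
  have b1: "bij_betw p' D (p ` D)"
    using assms(3,4) by (simp add: bij_betw_def inj_on_def p'_def image_def)
  have b2: "bij_betw p' (C - D) (p ` (C - D))"
  proof -
    have "bij_betw p (C - D) (p ` (C - D))" using assms(1)
      by (meson Diff_subset bij_betw_subset)
    then show ?thesis using bij_betw_cong[of "C - D" p' p] by (simp add: p'_def)
  qed
  have "bij_betw p' (D \<union> (C - D)) (p ` D \<union> p ` (C - D))"
  proof (rule bij_betw_combine[OF b1 b2])
    show "p ` D \<inter> p ` (C - D) = {}" using assms(1,2) by (auto simp: bij_betw_def inj_on_def)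
  qed
  moreover have "D \<union> (C - D) = C" using assms(2) by auto
  moreover have "p ` D \<union> p ` (C - D) = S" using assms(1,2) by (auto simp: bij_betw_def)
  ultimately show ?thesis by (simp add: p'_def)
qed

lemma cfg: assumes "finite C" "D \<subseteq> C" "inj_on q D" "inj_on q' D" "q ` D \<subseteq> {1..card C}"
  "q' ` D = q ` D"
  shows "\<exists>s\<in>rankings C. \<exists>s'\<in>rankings C. (\<forall>x\<in>D. pos s x = q x \<and> pos s' x = q' x)
           \<and> (\<forall>x\<in>C - D. pos s' x = pos s x)"
proof -
  obtain p where p: "bij_betw p C {1..card C}" "\<forall>x\<in>D. p x = q x"
    using bij_extend[OF assms(1,2,3,5)] by blast
  have qp: "q' ` D = p ` D" using assms(6) p(2) by (simp add: image_def)
  have p2: "bij_betw (\<lambda>x. if x \<in> D then q' x else p x) C {1..card C}"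
    by (rule bij_modify[OF p(1) assms(2,4) qp])
  obtain s where s: "s \<in> rankings C" "\<forall>c\<in>C. pos s c = p c" using mk_rank[OF assms(1) p(1)] by blast
  obtain s' where s': "s' \<in> rankings C" "\<forall>c\<in>C. pos s' c = (if c \<in> D then q' c else p c)"
    using mk_rank[OF assms(1) p2] by blast
  show ?thesis using s s' p(2) assms(2) by (intro bexI[OF _ s(1)] bexI[OF _ s'(1)]) auto
qed




definition Ff :: "(nat \<Rightarrow> real) \<Rightarrow> 'c \<Rightarrow> nat \<Rightarrow> 'c \<Rightarrow> 'c \<Rightarrow> 'c \<Rightarrow> real" where
  "Ff w a i c1 c2 \<alpha> = (if \<alpha> = a then 1 - w i + w (i+1)
     else 1 - w i - (if \<alpha> = c1 then w (i+1) else 0) + (if \<alpha> = c2 then 1 - w i else 0))"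

definition F0 :: "(nat \<Rightarrow> real) \<Rightarrow> 'c \<Rightarrow> nat \<Rightarrow> 'c \<Rightarrow> 'c \<Rightarrow> real" where
  "F0 w a i c2 \<alpha> = (if \<alpha> = a then 1 - w i else 1 - w i + (if \<alpha> = c2 then 1 - w i else 0))"

lemma cfg_full:
  assumes finC: "finite C" and cardC: "card C = m" and m3: "m \<ge> 3"
    and w1: "w 1 = 1" and wm: "w m = 0"
    and aC: "a \<in> C" and bC: "b \<in> C" and ab: "b \<noteq> a"
    and c1: "c1 \<in> C - {a, b}" and c2: "c2 \<in> C - {a, b}"
    and i: "1 \<le> i" "i \<le> m - 1" and ok: "i = 1 \<or> i = m - 1 \<or> c1 \<noteq> c2"
  shows "\<exists>s\<in>rankings C. \<exists>s'\<in>rankings C. pos s b = i \<and> pos s a = i + 1 \<and> pos s' b = 1 \<and>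
     (\<forall>\<alpha>\<in>C - {b}. 1 - sigma w s' \<alpha> - (sigma w s b - sigma w s \<alpha>) = Ff w a i c1 c2 \<alpha>)"
proof -
  have c1': "c1 \<in> C" "c1 \<noteq> a" "c1 \<noteq> b" using c1 by auto
  have c2': "c2 \<in> C" "c2 \<noteq> a" "c2 \<noteq> b" using c2 by auto
  consider (one) "i = 1" | (last) "i = m - 1" "i \<noteq> 1" | (mid) "2 \<le> i" "i \<le> m - 2" "c1 \<noteq> c2"
    using ok i by linarith
  then show ?thesis
  proof cases
    case one
    define D where "D = {b, a, c1}"
    define q where "q = (\<lambda>x. if x = b then i else if x = a then i + 1 else m)"
    define q' where "q' = (\<lambda>x. if x = b then 1 else if x = a then m else i + 1)"
    have "D \<subseteq> C" using aC bC c1 by (auto simp: D_def)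
    moreover have "inj_on q D" using ab c1' m3 one by (auto simp: D_def q_def inj_on_def)
    moreover have "inj_on q' D" using ab c1' m3 one by (auto simp: D_def q'_def inj_on_def)
    moreover have "q ` D \<subseteq> {1..card C}" using ab c1' m3 cardC one by (auto simp: D_def q_def)
    moreover have "q' ` D = q ` D" using ab c1' m3 one by (auto simp: D_def q_def q'_def)
    ultimately obtain s s' where ss: "s \<in> rankings C" "s' \<in> rankings C"
      "\<forall>x\<in>D. pos s x = q x \<and> pos s' x = q' x" "\<forall>x\<in>C - D. pos s' x = pos s x"
      using cfg[OF finC] by metis
    have P: "pos s b = i" "pos s a = i + 1" "pos s c1 = m" "pos s' b = 1" "pos s' a = m" "pos s' c1 = i + 1"
      using ss(3) ab c1' by (auto simp: D_def q_def q'_def)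
    have wi: "w i = 1" using one w1 by simp
    show ?thesis
    proof (rule bexI[OF _ ss(1)], rule bexI[OF _ ss(2)], intro conjI ballI)
      show "pos s b = i" "pos s a = i + 1" "pos s' b = 1" using P by auto
      fix \<alpha> assume al: "\<alpha> \<in> C - {b}"
      show "1 - sigma w s' \<alpha> - (sigma w s b - sigma w s \<alpha>) = Ff w a i c1 c2 \<alpha>"
      proof (cases "\<alpha> \<in> D")
        case True
        then have "\<alpha> = a \<or> \<alpha> = c1" using al by (auto simp: D_def)
        then show ?thesis using P wi wm c1' by (auto simp: sigma_def Ff_def)
      next
        case False
        then have "pos s' \<alpha> = pos s \<alpha>" "\<alpha> \<noteq> a" "\<alpha> \<noteq> c1" using ss(4) al by (auto simp: D_def)
        then show ?thesis using P wi by (auto simp: sigma_def Ff_def)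
      qed
    qed
  next
    case last
    define D where "D = {b, a, c2}"
    define q where "q = (\<lambda>x. if x = b then i else if x = a then i + 1 else 1)"
    define q' where "q' = (\<lambda>x. if x = b then 1 else if x = a then i + 1 else i)"
    have im: "i + 1 = m" using last m3 by simp
    have "D \<subseteq> C" using aC bC c2 by (auto simp: D_def)
    moreover have "inj_on q D" using ab c2' m3 last by (auto simp: D_def q_def inj_on_def)
    moreover have "inj_on q' D" using ab c2' m3 last by (auto simp: D_def q'_def inj_on_def)
    moreover have "q ` D \<subseteq> {1..card C}" using ab c2' m3 cardC last by (auto simp: D_def q_def)
    moreover have "q' ` D = q ` D" using ab c2' m3 last by (auto simp: D_def q_def q'_def)
    ultimately obtain s s' where ss: "s \<in> rankings C" "s' \<in> rankings C"
      "\<forall>x\<in>D. pos s x = q x \<and> pos s' x = q' x" "\<forall>x\<in>C - D. pos s' x = pos s x"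
      using cfg[OF finC] by metis
    have P: "pos s b = i" "pos s a = i + 1" "pos s c2 = 1" "pos s' b = 1" "pos s' a = i + 1" "pos s' c2 = i"
      using ss(3) ab c2' by (auto simp: D_def q_def q'_def)
    have wi: "w (i + 1) = 0" using im wm by simp
    show ?thesis
    proof (rule bexI[OF _ ss(1)], rule bexI[OF _ ss(2)], intro conjI ballI)
      show "pos s b = i" "pos s a = i + 1" "pos s' b = 1" using P by auto
      fix \<alpha> assume al: "\<alpha> \<in> C - {b}"
      show "1 - sigma w s' \<alpha> - (sigma w s b - sigma w s \<alpha>) = Ff w a i c1 c2 \<alpha>"
      proof (cases "\<alpha> \<in> D")
        case True
        then have "\<alpha> = a \<or> \<alpha> = c2" using al by (auto simp: D_def)
        then show ?thesis using P wi w1 c2' by (auto simp: sigma_def Ff_def)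
      next
        case False
        then have "pos s' \<alpha> = pos s \<alpha>" "\<alpha> \<noteq> a" "\<alpha> \<noteq> c2" using ss(4) al by (auto simp: D_def)
        then show ?thesis using P wi by (auto simp: sigma_def Ff_def)
      qed
    qed
  next
    case mid
    define D where "D = {b, a, c1, c2}"
    define q where "q = (\<lambda>x. if x = b then i else if x = a then i + 1 else if x = c1 then m else 1)"
    define q' where "q' = (\<lambda>x. if x = b then 1 else if x = a then m else if x = c1 then i + 1 else i)"
    have "D \<subseteq> C" using aC bC c1 c2 by (auto simp: D_def)
    moreover have "inj_on q D" using ab c1' c2' m3 mid by (auto simp: D_def q_def inj_on_def)
    moreover have "inj_on q' D" using ab c1' c2' m3 mid by (auto simp: D_def q'_def inj_on_def)
    moreover have "q ` D \<subseteq> {1..card C}" using ab c1' c2' m3 cardC mid by (auto simp: D_def q_def)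
    moreover have "q' ` D = q ` D" using ab c1' c2' m3 mid by (auto simp: D_def q_def q'_def)
    ultimately obtain s s' where ss: "s \<in> rankings C" "s' \<in> rankings C"
      "\<forall>x\<in>D. pos s x = q x \<and> pos s' x = q' x" "\<forall>x\<in>C - D. pos s' x = pos s x"
      using cfg[OF finC] by metis
    have P: "pos s b = i" "pos s a = i + 1" "pos s c1 = m" "pos s c2 = 1"
        "pos s' b = 1" "pos s' a = m" "pos s' c1 = i + 1" "pos s' c2 = i"
      using ss(3) ab c1' c2' mid(3) by (auto simp: D_def q_def q'_def)
    show ?thesis
    proof (rule bexI[OF _ ss(1)], rule bexI[OF _ ss(2)], intro conjI ballI)
      show "pos s b = i" "pos s a = i + 1" "pos s' b = 1" using P by auto
      fix \<alpha> assume al: "\<alpha> \<in> C - {b}"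
      show "1 - sigma w s' \<alpha> - (sigma w s b - sigma w s \<alpha>) = Ff w a i c1 c2 \<alpha>"
      proof (cases "\<alpha> \<in> D")
        case True
        then have "\<alpha> = a \<or> \<alpha> = c1 \<or> \<alpha> = c2" using al by (auto simp: D_def)
        then show ?thesis using P w1 wm c1' c2' mid(3) by (auto simp: sigma_def Ff_def)
      next
        case False
        then have "pos s' \<alpha> = pos s \<alpha>" "\<alpha> \<noteq> a" "\<alpha> \<noteq> c1" "\<alpha> \<noteq> c2" using ss(4) al by (auto simp: D_def)
        then show ?thesis using P by (auto simp: sigma_def Ff_def)
      qed
    qed
  qed
qed

lemma cfg_zero:
  assumes finC: "finite C" and cardC: "card C = m" and m3: "m \<ge> 3"
    and w1: "w 1 = 1" and wm: "w m = 0"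
    and aC: "a \<in> C" and bC: "b \<in> C" and ab: "b \<noteq> a"
    and c2: "c2 \<in> C - {a, b}"
    and i: "1 \<le> i" "i \<le> m - 1"
  shows "\<exists>s\<in>rankings C. \<exists>s'\<in>rankings C. pos s b = i \<and> pos s a = i + 1 \<and> pos s' b = 1 \<and>
     (\<forall>\<alpha>\<in>C - {b}. 1 - sigma w s' \<alpha> - (sigma w s b - sigma w s \<alpha>) = F0 w a i c2 \<alpha>)"
proof (cases "i = 1")
  case True
  note one = True
  define D where "D = {b, a}"
  define q where "q = (\<lambda>x. if x = b then i else i + 1)"
  have "D \<subseteq> C" using aC bC by (auto simp: D_def)
  moreover have "inj_on q D" using ab by (auto simp: D_def q_def inj_on_def)
  moreover have "q ` D \<subseteq> {1..card C}" using ab m3 cardC i by (auto simp: D_def q_def)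
  ultimately obtain s s' where ss: "s \<in> rankings C" "s' \<in> rankings C"
      "\<forall>x\<in>D. pos s x = q x \<and> pos s' x = q x" "\<forall>x\<in>C - D. pos s' x = pos s x"
    using cfg[OF finC, of D q q] by metis
  have P: "pos s b = i" "pos s a = i + 1" "pos s' b = 1" "pos s' a = i + 1"
    using ss(3) ab one by (auto simp: D_def q_def)
  have wi: "w i = 1" using one w1 by simp
  show ?thesis
  proof (rule bexI[OF _ ss(1)], rule bexI[OF _ ss(2)], intro conjI ballI)
    show "pos s b = i" "pos s a = i + 1" "pos s' b = 1" using P by auto
    fix \<alpha> assume al: "\<alpha> \<in> C - {b}"
    show "1 - sigma w s' \<alpha> - (sigma w s b - sigma w s \<alpha>) = F0 w a i c2 \<alpha>"
    proof (cases "\<alpha> = a")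
      case True
      then show ?thesis using P wi by (auto simp: sigma_def F0_def)
    next
      case False
      then have "pos s' \<alpha> = pos s \<alpha>" using ss(4) al by (auto simp: D_def)
      then show ?thesis using P wi False by (auto simp: sigma_def F0_def)
    qed
  qed
next
  case False
  then have i2: "2 \<le> i" using i by simp
  have c2': "c2 \<in> C" "c2 \<noteq> a" "c2 \<noteq> b" using c2 by auto
  define D where "D = {b, a, c2}"
  define q where "q = (\<lambda>x. if x = b then i else if x = a then i + 1 else 1)"
  define q' where "q' = (\<lambda>x. if x = b then 1 else if x = a then i + 1 else i)"
  have "D \<subseteq> C" using aC bC c2 by (auto simp: D_def)
  moreover have "inj_on q D" using ab c2' m3 i2 by (auto simp: D_def q_def inj_on_def)
  moreover have "inj_on q' D" using ab c2' m3 i2 by (auto simp: D_def q'_def inj_on_def)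
  moreover have "q ` D \<subseteq> {1..card C}" using ab c2' m3 cardC i2 i by (auto simp: D_def q_def)
  moreover have "q' ` D = q ` D" using ab c2' m3 i2 by (auto simp: D_def q_def q'_def)
  ultimately obtain s s' where ss: "s \<in> rankings C" "s' \<in> rankings C"
    "\<forall>x\<in>D. pos s x = q x \<and> pos s' x = q' x" "\<forall>x\<in>C - D. pos s' x = pos s x"
    using cfg[OF finC] by metis
  have P: "pos s b = i" "pos s a = i + 1" "pos s c2 = 1" "pos s' b = 1" "pos s' a = i + 1" "pos s' c2 = i"
    using ss(3) ab c2' by (auto simp: D_def q_def q'_def)
  show ?thesis
  proof (rule bexI[OF _ ss(1)], rule bexI[OF _ ss(2)], intro conjI ballI)
    show "pos s b = i" "pos s a = i + 1" "pos s' b = 1" using P by auto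
    fix \<alpha> assume al: "\<alpha> \<in> C - {b}"
    show "1 - sigma w s' \<alpha> - (sigma w s b - sigma w s \<alpha>) = F0 w a i c2 \<alpha>"
    proof (cases "\<alpha> \<in> D")
      case True
      then have "\<alpha> = a \<or> \<alpha> = c2" using al by (auto simp: D_def)
      then show ?thesis using P w1 c2' by (auto simp: sigma_def F0_def)
    next
      case False
      then have "pos s' \<alpha> = pos s \<alpha>" "\<alpha> \<noteq> a" "\<alpha> \<noteq> c2" using ss(4) al by (auto simp: D_def)
      then show ?thesis using P by (auto simp: sigma_def F0_def)
    qed
  qed
qed




lemma mix:
  fixes \<mu> :: "'k \<Rightarrow> real" and g :: "'t \<Rightarrow> real"
  assumes "finite S"
  shows "(\<Sum>t\<in>S. (\<Sum>k\<in>K. \<mu> k * (if \<tau> k = t then 1 else 0)) * g t)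
       = (\<Sum>k\<in>K. if \<tau> k \<in> S then \<mu> k * g (\<tau> k) else 0)"
proof -
  have "(\<Sum>t\<in>S. (\<Sum>k\<in>K. \<mu> k * (if \<tau> k = t then 1 else 0)) * g t)
      = (\<Sum>t\<in>S. \<Sum>k\<in>K. \<mu> k * (if \<tau> k = t then 1 else 0) * g t)"
    by (simp add: sum_distrib_right)
  also have "\<dots> = (\<Sum>k\<in>K. \<Sum>t\<in>S. \<mu> k * (if \<tau> k = t then 1 else 0) * g t)"
    by (rule sum.swap)
  also have "\<dots> = (\<Sum>k\<in>K. if \<tau> k \<in> S then \<mu> k * g (\<tau> k) else 0)"
  proof (rule sum.cong[OF refl])
    fix k
    have "(\<Sum>t\<in>S. \<mu> k * (if \<tau> k = t then 1 else 0) * g t) = (\<Sum>t\<in>S. if \<tau> k = t then \<mu> k * g t else 0)"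
      by (rule sum.cong) auto
    also have "\<dots> = (if \<tau> k \<in> S then \<mu> k * g (\<tau> k) else 0)"
      using assms by (simp add: sum.delta)
    finally show "(\<Sum>t\<in>S. \<mu> k * (if \<tau> k = t then 1 else 0) * g t) = (if \<tau> k \<in> S then \<mu> k * g (\<tau> k) else 0)" .
  qed
  finally show ?thesis .
qed

lemma score_sum: assumes "finite C"
  shows "(\<Sum>\<alpha>\<in>C. score C w N \<alpha>) = (\<Sum>t\<in>rankings C. real (N t)) * (\<Sum>i=1..card C. w i)"
proof -
  have "(\<Sum>\<alpha>\<in>C. score C w N \<alpha>) = (\<Sum>\<alpha>\<in>C. \<Sum>t\<in>rankings C. real (N t) * w (pos t \<alpha>))"
    by (simp add: score_def sigma_def)
  also have "\<dots> = (\<Sum>t\<in>rankings C. \<Sum>\<alpha>\<in>C. real (N t) * w (pos t \<alpha>))" by (rule sum.swap)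
  also have "\<dots> = (\<Sum>t\<in>rankings C. real (N t) * (\<Sum>i=1..card C. w i))"
  proof (rule sum.cong[OF refl])
    fix t assume t: "t \<in> rankings C"
    have "(\<Sum>\<alpha>\<in>C. w (pos t \<alpha>)) = (\<Sum>i=1..card C. w i)"
      using sum.reindex_bij_betw[OF pos_bij[OF t], of w] by simp
    then show "(\<Sum>\<alpha>\<in>C. real (N t) * w (pos t \<alpha>)) = real (N t) * (\<Sum>i=1..card C. w i)"
      by (simp add: sum_distrib_left[symmetric])
  qed
  also have "\<dots> = (\<Sum>t\<in>rankings C. real (N t)) * (\<Sum>i=1..card C. w i)"
    by (simp add: sum_distrib_right)
  finally show ?thesis .
qed

lemma inner_c:
  fixes p :: "'c \<Rightarrow> real" and q :: "'c \<Rightarrow> 'c \<Rightarrow> real"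
  assumes "finite E" "c \<in> E" "c \<noteq> a" "\<forall>c1\<in>E. (\<Sum>c2\<in>E. q c1 c2) = 1" "(\<Sum>c1\<in>E. p c1) = 1"
  shows "(\<Sum>c1\<in>E. \<Sum>c2\<in>E. (z * l * p c1 * q c1 c2) * Ff w a i c1 c2 c)
     = z * l * ((1 - w i) - p c * w (i+1) + (1 - w i) * (\<Sum>c1\<in>E. p c1 * q c1 c))"
proof -
  have e: "(z * l * p c1 * q c1 c2) * Ff w a i c1 c2 c
     = z * l * (1 - w i) * (p c1 * q c1 c2) - (if c1 = c then z * l * w (i+1) * (p c * q c c2) else 0)
       + (if c2 = c then z * l * (1 - w i) * (p c1 * q c1 c) else 0)" for c1 c2
    using assms(3) by (auto simp: Ff_def algebra_simps)
  have s1: "(\<Sum>c1\<in>E. \<Sum>c2\<in>E. z * l * (1 - w i) * (p c1 * q c1 c2)) = z * l * (1 - w i)"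
  proof -
    have "(\<Sum>c1\<in>E. \<Sum>c2\<in>E. z * l * (1 - w i) * (p c1 * q c1 c2))
       = (\<Sum>c1\<in>E. z * l * (1 - w i) * (p c1 * (\<Sum>c2\<in>E. q c1 c2)))"
      by (simp add: sum_distrib_left)
    also have "\<dots> = (\<Sum>c1\<in>E. z * l * (1 - w i) * p c1)" using assms(4) by simp
    also have "\<dots> = z * l * (1 - w i)" using assms(5) by (simp add: sum_distrib_left[symmetric])
    finally show ?thesis .
  qed
  have s2: "(\<Sum>c1\<in>E. \<Sum>c2\<in>E. (if c1 = c then z * l * w (i+1) * (p c * q c c2) else 0)) = z * l * w (i+1) * p c"
  proof -
    have "(\<Sum>c1\<in>E. \<Sum>c2\<in>E. (if c1 = c then z * l * w (i+1) * (p c * q c c2) else 0))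
      = (\<Sum>c1\<in>E. if c1 = c then (\<Sum>c2\<in>E. z * l * w (i+1) * (p c * q c c2)) else 0)"
      by (rule sum.cong) auto
    also have "\<dots> = (\<Sum>c2\<in>E. z * l * w (i+1) * (p c * q c c2))" using assms(1,2) by (simp add: sum.delta)
    also have "\<dots> = z * l * w (i+1) * p c * (\<Sum>c2\<in>E. q c c2)" by (simp add: sum_distrib_left algebra_simps)
    also have "\<dots> = z * l * w (i+1) * p c" using assms(2,4) by simp
    finally show ?thesis .
  qed
  have s3: "(\<Sum>c1\<in>E. \<Sum>c2\<in>E. (if c2 = c then z * l * (1 - w i) * (p c1 * q c1 c) else 0))
       = z * l * (1 - w i) * (\<Sum>c1\<in>E. p c1 * q c1 c)"
    using assms(1,2) by (simp add: sum.delta sum_distrib_left)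
  have "(\<Sum>c1\<in>E. \<Sum>c2\<in>E. (z * l * p c1 * q c1 c2) * Ff w a i c1 c2 c)
     = (\<Sum>c1\<in>E. \<Sum>c2\<in>E. z * l * (1 - w i) * (p c1 * q c1 c2))
       - (\<Sum>c1\<in>E. \<Sum>c2\<in>E. (if c1 = c then z * l * w (i+1) * (p c * q c c2) else 0))
       + (\<Sum>c1\<in>E. \<Sum>c2\<in>E. (if c2 = c then z * l * (1 - w i) * (p c1 * q c1 c) else 0))"
    by (simp only: e sum.distrib sum_subtractf)
  also have "\<dots> = z * l * ((1 - w i) - p c * w (i+1) + (1 - w i) * (\<Sum>c1\<in>E. p c1 * q c1 c))"
    by (simp only: s1 s2 s3) (simp add: algebra_simps)
  finally show ?thesis .
qed

lemma inner_a:
  fixes p :: "'c \<Rightarrow> real" and q :: "'c \<Rightarrow> 'c \<Rightarrow> real"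
  assumes "\<forall>c1\<in>E. (\<Sum>c2\<in>E. q c1 c2) = 1" "(\<Sum>c1\<in>E. p c1) = 1"
  shows "(\<Sum>c1\<in>E. \<Sum>c2\<in>E. (z * l * p c1 * q c1 c2) * Ff w a i c1 c2 a)
     = z * l * (1 - w i + w (i+1))"
proof -
  have e: "(z * l * p c1 * q c1 c2) * Ff w a i c1 c2 a = (z * l * (1 - w i + w (i+1)) * p c1) * q c1 c2" for c1 c2
    by (simp add: Ff_def)
  have "(\<Sum>c1\<in>E. \<Sum>c2\<in>E. (z * l * p c1 * q c1 c2) * Ff w a i c1 c2 a)
     = (\<Sum>c1\<in>E. z * l * (1 - w i + w (i+1)) * p c1 * (\<Sum>c2\<in>E. q c1 c2))"
    by (simp only: e sum_distrib_left)
  also have "\<dots> = (\<Sum>c1\<in>E. z * l * (1 - w i + w (i+1)) * p c1)" using assms(1) by simp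
  also have "\<dots> = z * l * (1 - w i + w (i+1))" using assms(2) by (simp add: sum_distrib_left[symmetric])
  finally show ?thesis .
qed

lemma inner0_c:
  assumes "finite E" "c \<in> E" "c \<noteq> a" "card E = r" "r > 0"
  shows "(\<Sum>c2\<in>E. (z * (1 - l) / r) * F0 w a i c2 c) = z * (1 - l) * ((1 - w i) + (1 - w i) / r)"
proof -
  have "(\<Sum>c2\<in>E. (z * (1 - l) / r) * F0 w a i c2 c)
     = (\<Sum>c2\<in>E. (z * (1 - l) / r) * (1 - w i) + (if c2 = c then (z * (1 - l) / r) * (1 - w i) else 0))"
    using assms(3) by (intro sum.cong) (auto simp: F0_def distrib_left)
  also have "\<dots> = r * ((z * (1 - l) / r) * (1 - w i)) + (z * (1 - l) / r) * (1 - w i)"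
    using assms by (simp add: sum.distrib sum.delta)
  also have "\<dots> = z * (1 - l) * ((1 - w i) + (1 - w i) / r)"
    using assms(5) by (simp add: field_simps)
  finally show ?thesis .
qed

lemma inner0_a:
  assumes "card E = r" "r > 0"
  shows "(\<Sum>c2\<in>E. (z * (1 - l) / r) * F0 w a i c2 a) = z * (1 - l) * (1 - w i)"
  using assms by (simp add: F0_def)




lemma sum_K3:
  fixes f :: "nat \<times> 'c \<times> 'c \<Rightarrow> real"
  shows "(\<Sum>k\<in>A \<times> (E \<times> E). f k) = (\<Sum>i\<in>A. \<Sum>c1\<in>E. \<Sum>c2\<in>E. f (i, c1, c2))"
  by (simp add: sum.cartesian_product)

lemma sum_K2:
  fixes f :: "nat \<times> 'c \<Rightarrow> real"
  shows "(\<Sum>k\<in>A \<times> E. f k) = (\<Sum>i\<in>A. \<Sum>c2\<in>E. f (i, c2))"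
  by (simp add: sum.cartesian_product)

lemma sum_slice:
  fixes f :: "nat \<times> 'e \<Rightarrow> real"
  assumes "finite A" "i \<in> A"
  shows "(\<Sum>k\<in>A \<times> B. if fst k = i then f k else 0) = (\<Sum>e\<in>B. f (i, e))"
proof -
  have "(\<Sum>j\<in>A. \<Sum>e\<in>B. if j = i then f (j, e) else 0) = (\<Sum>(j,e)\<in>A \<times> B. if j = i then f (j, e) else 0)"
    by (rule sum.cartesian_product)
  also have "\<dots> = (\<Sum>k\<in>A \<times> B. if fst k = i then f k else 0)" by (rule sum.cong) auto
  finally have "(\<Sum>k\<in>A \<times> B. if fst k = i then f k else 0) = (\<Sum>j\<in>A. \<Sum>e\<in>B. if j = i then f (j, e) else 0)" by simp
  also have "\<dots> = (\<Sum>j\<in>A. if j = i then (\<Sum>e\<in>B. f (j, e)) else 0)"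
    by (rule sum.cong) auto
  also have "\<dots> = (\<Sum>e\<in>B. f (i, e))" using assms by (simp add: sum.delta)
  finally show ?thesis .
qed

theorem theorem9:
  fixes C :: "'c set" and m n :: nat and w :: "nat \<Rightarrow> real"
    and N :: "'c list \<Rightarrow> nat" and a b :: 'c and z :: "nat \<Rightarrow> real"
  assumes finC: "finite C" and cardC: "card C = m" and m3: "m \<ge> 3"
    and w1: "w 1 = 1" and wm: "w m = 0"
    and wmono: "\<And>i j. 1 \<le> i \<Longrightarrow> i \<le> j \<Longrightarrow> j \<le> m \<Longrightarrow> w j \<le> w i"
    and Nsum: "(\<Sum>t\<in>rankings C. N t) = n"
    and aC: "a \<in> C" and bC: "b \<in> C" and ab: "b \<noteq> a"
    and a_win: "\<And>\<alpha>. \<alpha> \<in> C \<Longrightarrow> \<alpha> \<noteq> a \<Longrightarrow> score C w N a > score C w N \<alpha>"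
    and b_second: "\<And>\<alpha>. \<alpha> \<in> C \<Longrightarrow> \<alpha> \<noteq> a \<Longrightarrow> score C w N b \<ge> score C w N \<alpha>"
    and z_nonneg: "\<And>i. 1 \<le> i \<Longrightarrow> i \<le> m - 1 \<Longrightarrow> z i \<ge> 0"
    and z1: "(\<Sum>i=1..m-1. z i * (1 - w i + w (i+1))) \<ge> score C w N a - score C w N b"
    and z2: "(\<Sum>i=1..m-1. z i * (1 - w i))
               \<ge> real n * ((\<Sum>i=1..m. w i) / real m) - score C w N b"
  shows "\<exists>x y :: 'c list \<Rightarrow> real.
    let Tb = {t\<in>rankings C. pos t b = 1};
        Ti = (\<lambda>i. {t\<in>rankings C. pos t b = i \<and> pos t a = i + 1});
        Tba = (\<Union>i\<in>{1..m-1}. Ti i)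
    in (\<forall>t\<in>Tba. x t \<ge> 0) \<and> (\<forall>t\<in>Tb. y t \<ge> 0)
       \<and> (\<forall>i\<in>{1..m-1}. (\<Sum>t\<in>Ti i. x t) = z i)
       \<and> (\<Sum>t\<in>Tb. y t) = (\<Sum>t\<in>Tba. x t)
       \<and> (\<forall>\<alpha>\<in>C. \<alpha> \<noteq> b \<longrightarrow>
            (\<Sum>t\<in>Tb. y t * (1 - sigma w t \<alpha>))
              - (\<Sum>t\<in>Tba. x t * (sigma w t b - sigma w t \<alpha>))
            \<ge> score C w N \<alpha> - score C w N b)"
proof -
  define R where "R = rankings C"
  define E where "E = C - {a, b}"
  define r where "r = card E"
  have finR: "finite R"
  proof -
    have "R \<subseteq> {xs. set xs \<subseteq> C \<and> length xs = card C}" by (auto simp: R_def rankings_def distinct_card)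
    moreover have "finite {xs. set xs \<subseteq> C \<and> length xs = card C}" using finC by (rule finite_lists_length_eq)
    ultimately show ?thesis by (rule finite_subset)
  qed
  have finE: "finite E" using finC by (simp add: E_def)
  have rm: "r = m - 2"
  proof -
    have "card {a, b} = 2" using ab by simp
    then show ?thesis using finC aC bC cardC by (simp add: r_def E_def card_Diff_subset)
  qed
  have r1: "r \<ge> 1" using rm m3 by simp
  have rpos: "real r > 0" using r1 by simp
  have rposn: "r > 0" using r1 by simp
  have mr: "real m = real r + 2" using rm m3 by simp
  have wb: "\<And>i. 1 \<le> i \<Longrightarrow> i \<le> m \<Longrightarrow> 0 \<le> w i \<and> w i \<le> 1"
    using wmono w1 wm m3 by (metis le_refl order.trans one_le_numeral le_trans)
  have zb: "\<And>i. i \<in> {1..m-1} \<Longrightarrow> z i \<ge> 0" using z_nonneg by auto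
  define sb where "sb = score C w N b"
  define B where "B = (\<Sum>i=1..m-1. z i * (1 - w i))"
  define W where "W = (\<Sum>i=1..m-1. z i * w (i+1))"
  define da where "da = score C w N a - sb"
  define lam where "lam = (if da \<le> B then 0 else (da - B) / W)"
  define s where "s = (\<lambda>c. sb - score C w N c)"
  define Kc where "Kc = (\<lambda>c. B + s c + lam * B / (real r - 1) + (1 - lam) * B / real r)"
  define SK where "SK = (\<Sum>c\<in>E. Kc c)"
  define p where "p = (\<lambda>c. if SK = 0 then 1 / real r else Kc c / SK)"
  define q where "q = (\<lambda>(c1::'c) (c2::'c). if r = 1 then 1 else if c1 \<noteq> c2 then 1 / (real r - 1) else (0::real))"
  have B0: "B \<ge> 0" unfolding B_def
    by (rule sum_nonneg) (use zb wb in \<open>auto intro!: mult_nonneg_nonneg\<close>)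
  have W0: "W \<ge> 0" unfolding W_def
    by (rule sum_nonneg) (use zb wb in \<open>auto intro!: mult_nonneg_nonneg\<close>)
  have BW: "B + W \<ge> da"
  proof -
    have "(\<Sum>i=1..m-1. z i * (1 - w i + w (i+1))) = B + W"
      unfolding B_def W_def by (simp add: sum.distrib[symmetric] algebra_simps)
    then show ?thesis using z1 by (simp add: da_def sb_def)
  qed
  have s0: "\<forall>c\<in>E. s c \<ge> 0" using b_second by (auto simp: s_def sb_def E_def)
  have lam01: "0 \<le> lam \<and> lam \<le> 1"
  proof (cases "da \<le> B")
    case True then show ?thesis by (simp add: lam_def)
  next
    case False
    then have "W > 0" using BW by linarith
    then show ?thesis using False BW by (simp add: lam_def field_simps)
  qed
  have lamW: "lam * W = (if da \<le> B then 0 else da - B)"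
  proof (cases "da \<le> B")
    case True then show ?thesis by (simp add: lam_def)
  next
    case False
    then have "W > 0" using BW by linarith
    then show ?thesis using False by (simp add: lam_def)
  qed
  have va: "B + lam * W \<ge> da" using lamW by (auto split: if_splits)
  have ssum0: "(\<Sum>c\<in>E. s c) \<ge> 0" using s0 by (simp add: sum_nonneg)
  have key: "lam * W \<le> (real r + 1) * B + (\<Sum>c\<in>E. s c)"
  proof (cases "da \<le> B")
    case True
    then have "lam * W = 0" using lamW by simp
    moreover have "(real r + 1) * B \<ge> 0" using B0 by simp
    ultimately show ?thesis using ssum0 by linarith
  next
    case False
    define S where "S = (\<Sum>i=1..m. w i)"
    have tot: "(\<Sum>\<alpha>\<in>C. score C w N \<alpha>) = real n * S"
      using score_sum[OF finC, of w N] Nsum cardC by (simp add: S_def of_nat_sum[symmetric])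
    have Cd: "C = insert a (insert b E)" using aC bC by (auto simp: E_def)
    have sg: "sum g C = sum g (insert a (insert b E))" for g :: "'c \<Rightarrow> real" using Cd by simp
    have aE: "a \<notin> insert b E" "b \<notin> E" using ab by (auto simp: E_def)
    have "(\<Sum>\<alpha>\<in>C. score C w N \<alpha>) = score C w N a + (score C w N b + (\<Sum>c\<in>E. score C w N c))"
      unfolding sg[of "score C w N"] using finE aE by simp
    then have sE: "(\<Sum>c\<in>E. score C w N c) = real n * S - score C w N a - sb" using tot by (simp add: sb_def)
    have "(\<Sum>c\<in>E. s c) = real r * sb - (\<Sum>c\<in>E. score C w N c)"
      by (simp add: s_def sum_subtractf r_def)
    then have ss: "(\<Sum>c\<in>E. s c) = real r * sb - real n * S + score C w N a + sb" using sE by simp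
    have z2': "B \<ge> real n * (S / real m) - sb" using z2 by (simp add: B_def S_def sb_def)
    have "real n * S \<le> real m * (B + sb)"
    proof -
      have "real n * S = real m * (real n * (S / real m))" using rpos mr by (simp add: field_simps)
      also have "\<dots> \<le> real m * (B + sb)" using z2' mr rpos by (intro mult_left_mono) auto
      finally show ?thesis .
    qed
    then show ?thesis using lamW False ss mr by (simp add: da_def algebra_simps)
  qed
  have K0: "\<forall>c\<in>E. Kc c \<ge> 0"
    using s0 B0 lam01 rpos r1 by (auto simp: Kc_def intro!: add_nonneg_nonneg divide_nonneg_nonneg mult_nonneg_nonneg)
  have SK0: "SK \<ge> 0" using K0 by (simp add: SK_def sum_nonneg)
  have p0: "\<forall>c\<in>E. p c \<ge> 0" using K0 SK0 rpos by (auto simp: p_def)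
  have psum: "(\<Sum>c\<in>E. p c) = 1"
  proof (cases "SK = 0")
    case True then show ?thesis using rpos by (simp add: p_def r_def)
  next
    case False then show ?thesis by (simp add: p_def sum_divide_distrib[symmetric] SK_def)
  qed
  have pbound: "\<forall>c\<in>E. p c * (lam * W + lam * B / (real r - 1)) \<le> Kc c" if r2: "r \<ge> 2"
  proof
    fix c assume c: "c \<in> E"
    define Dd where "Dd = lam * W + lam * B / (real r - 1)"
    have Dd0: "Dd \<ge> 0" using lam01 W0 B0 r2 by (simp add: Dd_def)
    have "SK = real r * B + (\<Sum>c\<in>E. s c) + real r * (lam * B / (real r - 1)) + real r * ((1 - lam) * B / real r)"
      by (simp add: SK_def Kc_def sum.distrib r_def)
    also have "real r * (lam * B / (real r - 1)) = lam * B + lam * B / (real r - 1)"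
      using r2 by (simp add: field_simps)
    also have "real r * ((1 - lam) * B / real r) = (1 - lam) * B" using rpos by simp
    finally have "SK - Dd = (real r + 1) * B + (\<Sum>c\<in>E. s c) - lam * W" by (simp add: Dd_def algebra_simps)
    then have DSK: "Dd \<le> SK" using key by simp
    show "p c * (lam * W + lam * B / (real r - 1)) \<le> Kc c"
    proof (cases "SK = 0")
      case True
      then have "Dd = 0" using DSK Dd0 by simp
      then show ?thesis using K0 c by (simp add: Dd_def)
    next
      case False
      then have "SK > 0" using SK0 by simp
      then have "Kc c / SK * Dd \<le> Kc c / SK * SK" using DSK K0 c by (intro mult_left_mono) auto
      then show ?thesis using False by (simp add: p_def Dd_def)
    qed
  qed
  have qsum: "\<forall>c1\<in>E. (\<Sum>c2\<in>E. q c1 c2) = 1"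
  proof
    fix c1 assume c1: "c1 \<in> E"
    show "(\<Sum>c2\<in>E. q c1 c2) = 1"
    proof (cases "r = 1")
      case True then show ?thesis by (simp add: q_def r_def)
    next
      case False
      then have r2: "real r - 1 \<noteq> 0" using r1 by simp
      have "(\<Sum>c2\<in>E. q c1 c2) = (\<Sum>c2\<in>E. 1 / (real r - 1) - (if c2 = c1 then 1 / (real r - 1) else 0))"
        using False by (intro sum.cong) (auto simp: q_def)
      also have "\<dots> = (\<Sum>c2\<in>E. 1 / (real r - 1)) - 1 / (real r - 1)"
        using finE c1 by (simp add: sum_subtractf sum.delta)
      also have "(\<Sum>c2\<in>E. 1 / (real r - 1)) = real r / (real r - 1)" by (simp add: r_def[symmetric])
      also have "real r / (real r - 1) - 1 / (real r - 1) = 1" using r2 by (simp add: diff_divide_distrib[symmetric])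
      finally show ?thesis .
    qed
  qed
  have xi: "\<forall>c\<in>E. (\<Sum>c1\<in>E. p c1 * q c1 c) = (if r = 1 then 1 else (1 - p c) / (real r - 1))"
  proof
    fix c assume c: "c \<in> E"
    show "(\<Sum>c1\<in>E. p c1 * q c1 c) = (if r = 1 then 1 else (1 - p c) / (real r - 1))"
    proof (cases "r = 1")
      case True
      then have "(\<Sum>c1\<in>E. p c1 * q c1 c) = (\<Sum>c1\<in>E. p c1)" by (simp add: q_def)
      then show ?thesis using psum True by simp
    next
      case False
      have "(\<Sum>c1\<in>E. p c1 * q c1 c) = (\<Sum>c1\<in>E. p c1 / (real r - 1) - (if c1 = c then p c / (real r - 1) else 0))"
        using False by (intro sum.cong) (auto simp: q_def)
      also have "\<dots> = (\<Sum>c1\<in>E. p c1) / (real r - 1) - p c / (real r - 1)"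
        using finE c by (simp add: sum_subtractf sum.delta sum_divide_distrib)
      also have "\<dots> = (1 - p c) / (real r - 1)" using psum by (simp add: diff_divide_distrib)
      finally show ?thesis using False by simp
    qed
  qed
  have q0: "\<And>c1 c2. q c1 c2 \<ge> 0" using r1 by (auto simp: q_def)
  have wi1: "w 1 = 1" by (rule w1)
  define ok where "ok = (\<lambda>i (c1::'c) c2. i = 1 \<or> i = m - 1 \<or> c1 \<noteq> c2)"
  define Pf where "Pf = (\<lambda>i c1 c2 (ss::'c list \<times> 'c list). fst ss \<in> R \<and> snd ss \<in> R \<and>
      pos (fst ss) b = i \<and> pos (fst ss) a = i + 1 \<and> pos (snd ss) b = 1 \<and>
      (ok i c1 c2 \<longrightarrow> (\<forall>\<alpha>\<in>C - {b}. 1 - sigma w (snd ss) \<alpha> - (sigma w (fst ss) b - sigma w (fst ss) \<alpha>)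
          = Ff w a i c1 c2 \<alpha>)))"
  define P0 where "P0 = (\<lambda>i c2 (ss::'c list \<times> 'c list). fst ss \<in> R \<and> snd ss \<in> R \<and>
      pos (fst ss) b = i \<and> pos (fst ss) a = i + 1 \<and> pos (snd ss) b = 1 \<and>
      (\<forall>\<alpha>\<in>C - {b}. 1 - sigma w (snd ss) \<alpha> - (sigma w (fst ss) b - sigma w (fst ss) \<alpha>)
          = F0 w a i c2 \<alpha>))"
  have ex0: "\<exists>ss. P0 i c2 ss" if i: "i \<in> {1..m-1}" and c2: "c2 \<in> E" for i c2
  proof -
    obtain s1 s2 where "s1 \<in> rankings C" "s2 \<in> rankings C" "pos s1 b = i" "pos s1 a = i + 1" "pos s2 b = 1"
      "\<forall>\<alpha>\<in>C - {b}. 1 - sigma w s2 \<alpha> - (sigma w s1 b - sigma w s1 \<alpha>) = F0 w a i c2 \<alpha>"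
      using cfg_zero[OF finC cardC m3 w1 wm aC bC ab, of c2 i] c2 i by (auto simp: E_def)
    then have "P0 i c2 (s1, s2)" by (simp add: P0_def R_def)
    then show ?thesis by blast
  qed
  have exf: "\<exists>ss. Pf i c1 c2 ss" if i: "i \<in> {1..m-1}" and c1: "c1 \<in> E" and c2: "c2 \<in> E" for i c1 c2
  proof (cases "ok i c1 c2")
    case True
    obtain s1 s2 where "s1 \<in> rankings C" "s2 \<in> rankings C" "pos s1 b = i" "pos s1 a = i + 1" "pos s2 b = 1"
      "\<forall>\<alpha>\<in>C - {b}. 1 - sigma w s2 \<alpha> - (sigma w s1 b - sigma w s1 \<alpha>) = Ff w a i c1 c2 \<alpha>"
      using cfg_full[OF finC cardC m3 w1 wm aC bC ab, of c1 c2 i] c1 c2 i True by (auto simp: E_def ok_def)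
    then have "Pf i c1 c2 (s1, s2)" by (simp add: Pf_def R_def)
    then show ?thesis by blast
  next
    case False
    obtain ss where "P0 i c2 ss" using ex0 i c2 by blast
    then have "Pf i c1 c2 ss" using False by (simp add: Pf_def P0_def)
    then show ?thesis by blast
  qed
  define Sf where "Sf = (\<lambda>(i, c1, c2). SOME ss. Pf i c1 c2 ss)"
  define S0 where "S0 = (\<lambda>(i, c2). SOME ss. P0 i c2 ss)"
  define Kf where "Kf = {1..m-1} \<times> (E \<times> E)"
  define K0 where "K0 = {1..m-1} \<times> E"
  have Sf: "Pf (fst k) (fst (snd k)) (snd (snd k)) (Sf k)" if "k \<in> Kf" for k
  proof -
    obtain i c1 c2 where k: "k = (i, c1, c2)" by (cases k) auto
    show ?thesis using that exf[of i c1 c2] unfolding k Sf_def Kf_def by (auto intro: someI_ex)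
  qed
  have S0: "P0 (fst k) (snd k) (S0 k)" if "k \<in> K0" for k
  proof -
    obtain i c2 where k: "k = (i, c2)" by (cases k) auto
    show ?thesis using that ex0[of i c2] unfolding k S0_def K0_def by (auto intro: someI_ex)
  qed
  define mf where "mf = (\<lambda>(i, c1, c2). z i * lam * p c1 * q c1 c2)"
  define m0 where "m0 = (\<lambda>(i::nat, c2::'c). z i * (1 - lam) / real r)"
  have finKf: "finite Kf" using finE by (simp add: Kf_def)
  have finK0: "finite K0" using finE by (simp add: K0_def)
  have mf0: "mf k \<ge> 0" if "k \<in> Kf" for k
    using that zb lam01 p0 q0 by (auto simp: mf_def Kf_def intro!: mult_nonneg_nonneg)
  have m00: "m0 k \<ge> 0" if "k \<in> K0" for k
    using that zb lam01 rpos by (auto simp: m0_def K0_def intro!: mult_nonneg_nonneg divide_nonneg_nonneg)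
  have mfok: "ok (fst k) (fst (snd k)) (snd (snd k))" if "k \<in> Kf" "mf k \<noteq> 0" for k
  proof -
    obtain i c1 c2 where k: "k = (i, c1, c2)" by (cases k) auto
    have "q c1 c2 \<noteq> 0" using that(2) by (auto simp: k mf_def)
    then have "r = 1 \<or> c1 \<noteq> c2" by (auto simp: q_def)
    moreover have "r = 1 \<Longrightarrow> i = 1 \<or> i = m - 1" using that(1) rm by (auto simp: k Kf_def)
    ultimately show ?thesis by (auto simp: k ok_def)
  qed
  define x where "x = (\<lambda>t. (\<Sum>k\<in>Kf. mf k * (if fst (Sf k) = t then 1 else 0))
                         + (\<Sum>k\<in>K0. m0 k * (if fst (S0 k) = t then 1 else 0)))"
  define y where "y = (\<lambda>t. (\<Sum>k\<in>Kf. mf k * (if snd (Sf k) = t then 1 else 0))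
                         + (\<Sum>k\<in>K0. m0 k * (if snd (S0 k) = t then 1 else 0)))"
  have xsum: "(\<Sum>t\<in>S. x t * g t) = (\<Sum>k\<in>Kf. if fst (Sf k) \<in> S then mf k * g (fst (Sf k)) else 0)
       + (\<Sum>k\<in>K0. if fst (S0 k) \<in> S then m0 k * g (fst (S0 k)) else 0)" if "finite S" for S g
  proof -
    have "(\<Sum>t\<in>S. x t * g t) = (\<Sum>t\<in>S. (\<Sum>k\<in>Kf. mf k * (if fst (Sf k) = t then 1 else 0)) * g t)
        + (\<Sum>t\<in>S. (\<Sum>k\<in>K0. m0 k * (if fst (S0 k) = t then 1 else 0)) * g t)"
      by (simp add: x_def distrib_right sum.distrib)
    then show ?thesis
      using mix[OF that, where \<mu>=mf and \<tau>="\<lambda>k. fst (Sf k)" and K=Kf and g=g]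
        mix[OF that, where \<mu>=m0 and \<tau>="\<lambda>k. fst (S0 k)" and K=K0 and g=g] by simp
  qed
  have ysum: "(\<Sum>t\<in>S. y t * g t) = (\<Sum>k\<in>Kf. if snd (Sf k) \<in> S then mf k * g (snd (Sf k)) else 0)
       + (\<Sum>k\<in>K0. if snd (S0 k) \<in> S then m0 k * g (snd (S0 k)) else 0)" if "finite S" for S g
  proof -
    have "(\<Sum>t\<in>S. y t * g t) = (\<Sum>t\<in>S. (\<Sum>k\<in>Kf. mf k * (if snd (Sf k) = t then 1 else 0)) * g t)
        + (\<Sum>t\<in>S. (\<Sum>k\<in>K0. m0 k * (if snd (S0 k) = t then 1 else 0)) * g t)"
      by (simp add: y_def distrib_right sum.distrib)
    then show ?thesis
      using mix[OF that, where \<mu>=mf and \<tau>="\<lambda>k. snd (Sf k)" and K=Kf and g=g]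
        mix[OF that, where \<mu>=m0 and \<tau>="\<lambda>k. snd (S0 k)" and K=K0 and g=g] by simp
  qed
  define Tb where "Tb = {t \<in> rankings C. pos t b = 1}"
  define Ti where "Ti = (\<lambda>i. {t \<in> rankings C. pos t b = i \<and> pos t a = i + 1})"
  define Tba where "Tba = (\<Union>i\<in>{1..m-1}. Ti i)"
  have finTb: "finite Tb" using finR by (auto simp: Tb_def R_def)
  have finTi: "finite (Ti i)" for i using finR by (auto simp: Ti_def R_def)
  have finTba: "finite Tba" using finTi by (simp add: Tba_def)
  have inTba_f: "fst (Sf k) \<in> Tba" "snd (Sf k) \<in> Tb" if "k \<in> Kf" for k
    using Sf[OF that] that by (auto simp: Pf_def Tba_def Ti_def Tb_def R_def Kf_def)
  have inTba_0: "fst (S0 k) \<in> Tba" "snd (S0 k) \<in> Tb" if "k \<in> K0" for k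
    using S0[OF that] that by (auto simp: P0_def Tba_def Ti_def Tb_def R_def K0_def)
  have G1: "\<forall>t. x t \<ge> 0" unfolding x_def using mf0 m00
    by (auto intro!: add_nonneg_nonneg sum_nonneg mult_nonneg_nonneg)
  have G2: "\<forall>t. y t \<ge> 0" unfolding y_def using mf0 m00
    by (auto intro!: add_nonneg_nonneg sum_nonneg mult_nonneg_nonneg)
  have G3: "\<forall>i\<in>{1..m-1}. (\<Sum>t\<in>Ti i. x t) = z i"
  proof
    fix i assume i: "i \<in> {1..m-1}"
    have "(\<Sum>t\<in>Ti i. x t) = (\<Sum>t\<in>Ti i. x t * 1)" by simp
    also have "\<dots> = (\<Sum>k\<in>Kf. if fst (Sf k) \<in> Ti i then mf k * 1 else 0)
       + (\<Sum>k\<in>K0. if fst (S0 k) \<in> Ti i then m0 k * 1 else 0)" by (rule xsum[OF finTi])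
    also have "(\<Sum>k\<in>Kf. if fst (Sf k) \<in> Ti i then mf k * 1 else 0) = (\<Sum>k\<in>Kf. if fst k = i then mf k else 0)"
    proof (rule sum.cong[OF refl])
      fix k assume k: "k \<in> Kf"
      show "(if fst (Sf k) \<in> Ti i then mf k * 1 else 0) = (if fst k = i then mf k else 0)"
        using Sf[OF k] by (auto simp: Pf_def Ti_def R_def)
    qed
    also have "(\<Sum>k\<in>K0. if fst (S0 k) \<in> Ti i then m0 k * 1 else 0) = (\<Sum>k\<in>K0. if fst k = i then m0 k else 0)"
    proof (rule sum.cong[OF refl])
      fix k assume k: "k \<in> K0"
      show "(if fst (S0 k) \<in> Ti i then m0 k * 1 else 0) = (if fst k = i then m0 k else 0)"
        using S0[OF k] by (auto simp: P0_def Ti_def R_def)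
    qed
    also have "(\<Sum>k\<in>Kf. if fst k = i then mf k else 0) = (\<Sum>e\<in>E \<times> E. mf (i, e))"
      unfolding Kf_def by (rule sum_slice) (use i in auto)
    also have "\<dots> = (\<Sum>c1\<in>E. \<Sum>c2\<in>E. z i * lam * p c1 * q c1 c2)"
      by (simp add: sum.cartesian_product mf_def)
    also have "\<dots> = (\<Sum>c1\<in>E. z i * lam * p c1 * (\<Sum>c2\<in>E. q c1 c2))"
      by (simp add: sum_distrib_left)
    also have "\<dots> = (\<Sum>c1\<in>E. z i * lam * p c1)" using qsum by simp
    also have "\<dots> = z i * lam" using psum by (simp add: sum_distrib_left[symmetric])
    also have "(\<Sum>k\<in>K0. if fst k = i then m0 k else 0) = (\<Sum>e\<in>E. m0 (i, e))"
      unfolding K0_def by (rule sum_slice) (use i in auto)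
    also have "\<dots> = z i * (1 - lam)" using rpos by (simp add: m0_def r_def[symmetric])
    finally show "(\<Sum>t\<in>Ti i. x t) = z i" by (simp add: algebra_simps)
  qed
  have G4: "(\<Sum>t\<in>Tb. y t) = (\<Sum>t\<in>Tba. x t)"
  proof -
    have "(\<Sum>t\<in>Tb. y t) = (\<Sum>t\<in>Tb. y t * 1)" by simp
    also have "\<dots> = (\<Sum>k\<in>Kf. mf k) + (\<Sum>k\<in>K0. m0 k)"
      unfolding ysum[OF finTb, of "\<lambda>_. 1"] using inTba_f inTba_0 by simp
    also have "\<dots> = (\<Sum>t\<in>Tba. x t * 1)"
      unfolding xsum[OF finTba, of "\<lambda>_. 1"] using inTba_f inTba_0 by simp
    finally show ?thesis by simp
  qed
  define V where "V = (\<lambda>\<alpha> (ss::'c list \<times> 'c list). 1 - sigma w (snd ss) \<alpha> - (sigma w (fst ss) b - sigma w (fst ss) \<alpha>))"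
  have LHS: "(\<Sum>t\<in>Tb. y t * (1 - sigma w t \<alpha>)) - (\<Sum>t\<in>Tba. x t * (sigma w t b - sigma w t \<alpha>))
      = (\<Sum>i\<in>{1..m-1}. \<Sum>c1\<in>E. \<Sum>c2\<in>E. (z i * lam * p c1 * q c1 c2) * Ff w a i c1 c2 \<alpha>)
      + (\<Sum>i\<in>{1..m-1}. \<Sum>c2\<in>E. (z i * (1 - lam) / real r) * F0 w a i c2 \<alpha>)"
    if al: "\<alpha> \<in> C" "\<alpha> \<noteq> b" for \<alpha>
  proof -
    have "(\<Sum>t\<in>Tb. y t * (1 - sigma w t \<alpha>)) = (\<Sum>k\<in>Kf. mf k * (1 - sigma w (snd (Sf k)) \<alpha>))
        + (\<Sum>k\<in>K0. m0 k * (1 - sigma w (snd (S0 k)) \<alpha>))"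
      using inTba_f inTba_0 by (simp add: ysum[OF finTb])
    moreover have "(\<Sum>t\<in>Tba. x t * (sigma w t b - sigma w t \<alpha>)) = (\<Sum>k\<in>Kf. mf k * (sigma w (fst (Sf k)) b - sigma w (fst (Sf k)) \<alpha>))
        + (\<Sum>k\<in>K0. m0 k * (sigma w (fst (S0 k)) b - sigma w (fst (S0 k)) \<alpha>))"
      using inTba_f inTba_0 by (simp add: xsum[OF finTba])
    ultimately have "(\<Sum>t\<in>Tb. y t * (1 - sigma w t \<alpha>)) - (\<Sum>t\<in>Tba. x t * (sigma w t b - sigma w t \<alpha>))
        = (\<Sum>k\<in>Kf. mf k * V \<alpha> (Sf k)) + (\<Sum>k\<in>K0. m0 k * V \<alpha> (S0 k))"
      by (simp add: V_def sum_subtractf[symmetric] algebra_simps sum.distrib[symmetric])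
    also have "(\<Sum>k\<in>Kf. mf k * V \<alpha> (Sf k)) = (\<Sum>k\<in>Kf. mf k * Ff w a (fst k) (fst (snd k)) (snd (snd k)) \<alpha>)"
    proof (rule sum.cong[OF refl])
      fix k assume k: "k \<in> Kf"
      show "mf k * V \<alpha> (Sf k) = mf k * Ff w a (fst k) (fst (snd k)) (snd (snd k)) \<alpha>"
      proof (cases "mf k = 0")
        case False
        then show ?thesis using Sf[OF k] mfok[OF k False] al by (simp add: Pf_def V_def)
      qed simp
    qed
    also have "(\<Sum>k\<in>K0. m0 k * V \<alpha> (S0 k)) = (\<Sum>k\<in>K0. m0 k * F0 w a (fst k) (snd k) \<alpha>)"
      by (rule sum.cong[OF refl]) (use S0 al in \<open>auto simp: P0_def V_def\<close>)
    also have "(\<Sum>k\<in>Kf. mf k * Ff w a (fst k) (fst (snd k)) (snd (snd k)) \<alpha>)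
        = (\<Sum>i\<in>{1..m-1}. \<Sum>c1\<in>E. \<Sum>c2\<in>E. (z i * lam * p c1 * q c1 c2) * Ff w a i c1 c2 \<alpha>)"
      unfolding Kf_def sum_K3 by (simp add: mf_def)
    also have "(\<Sum>k\<in>K0. m0 k * F0 w a (fst k) (snd k) \<alpha>)
        = (\<Sum>i\<in>{1..m-1}. \<Sum>c2\<in>E. (z i * (1 - lam) / real r) * F0 w a i c2 \<alpha>)"
      unfolding K0_def sum_K2 by (simp add: m0_def)
    finally show ?thesis .
  qed
  have G5: "\<forall>\<alpha>\<in>C. \<alpha> \<noteq> b \<longrightarrow>
            (\<Sum>t\<in>Tb. y t * (1 - sigma w t \<alpha>)) - (\<Sum>t\<in>Tba. x t * (sigma w t b - sigma w t \<alpha>))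
            \<ge> score C w N \<alpha> - score C w N b"
  proof (intro ballI impI)
    fix \<alpha> assume al: "\<alpha> \<in> C" "\<alpha> \<noteq> b"
    show "(\<Sum>t\<in>Tb. y t * (1 - sigma w t \<alpha>)) - (\<Sum>t\<in>Tba. x t * (sigma w t b - sigma w t \<alpha>))
            \<ge> score C w N \<alpha> - score C w N b"
    proof (cases "\<alpha> = a")
      case True
      have "(\<Sum>i\<in>{1..m-1}. \<Sum>c1\<in>E. \<Sum>c2\<in>E. (z i * lam * p c1 * q c1 c2) * Ff w a i c1 c2 \<alpha>)
         + (\<Sum>i\<in>{1..m-1}. \<Sum>c2\<in>E. (z i * (1 - lam) / real r) * F0 w a i c2 \<alpha>)
         = (\<Sum>i\<in>{1..m-1}. z i * lam * (1 - w i + w (i+1))) + (\<Sum>i\<in>{1..m-1}. z i * (1 - lam) * (1 - w i))"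
        unfolding True inner_a[OF qsum psum] inner0_a[OF r_def[symmetric] rposn] by simp
      also have "\<dots> = B + lam * W"
        unfolding B_def W_def by (simp add: sum_distrib_left sum.distrib[symmetric] algebra_simps)
      finally show ?thesis using LHS[OF al] va True by (simp add: da_def sb_def)
    next
      case False
      then have c: "\<alpha> \<in> E" using al by (simp add: E_def)
      define \<xi> where "\<xi> = (\<Sum>c1\<in>E. p c1 * q c1 \<alpha>)"
      have "(\<Sum>i\<in>{1..m-1}. \<Sum>c1\<in>E. \<Sum>c2\<in>E. (z i * lam * p c1 * q c1 c2) * Ff w a i c1 c2 \<alpha>)
         + (\<Sum>i\<in>{1..m-1}. \<Sum>c2\<in>E. (z i * (1 - lam) / real r) * F0 w a i c2 \<alpha>)
         = (\<Sum>i\<in>{1..m-1}. z i * lam * ((1 - w i) - p \<alpha> * w (i+1) + (1 - w i) * \<xi>))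
           + (\<Sum>i\<in>{1..m-1}. z i * (1 - lam) * ((1 - w i) + (1 - w i) / real r))"
        unfolding inner_c[OF finE c False qsum psum] inner0_c[OF finE c False r_def[symmetric] rposn] \<xi>_def
        by simp
      also have "\<dots> = (\<Sum>i\<in>{1..m-1}. z i * lam * ((1 - w i) - p \<alpha> * w (i+1) + (1 - w i) * \<xi>)
           + z i * (1 - lam) * ((1 - w i) + (1 - w i) / real r))"
        by (simp add: sum.distrib)
      also have "\<dots> = (\<Sum>i\<in>{1..m-1}. (z i * (1 - w i)) * (1 + lam * \<xi> + (1 - lam) / real r)
                         - lam * p \<alpha> * (z i * w (i+1)))"
        by (rule sum.cong[OF refl]) (use rpos in \<open>simp add: field_simps\<close>)
      also have "\<dots> = B * (1 + lam * \<xi> + (1 - lam) / real r) - lam * p \<alpha> * W"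
        unfolding B_def W_def by (simp add: sum_subtractf sum_distrib_left sum_distrib_right)
      finally have eq: "(\<Sum>t\<in>Tb. y t * (1 - sigma w t \<alpha>)) - (\<Sum>t\<in>Tba. x t * (sigma w t b - sigma w t \<alpha>))
          = B * (1 + lam * \<xi> + (1 - lam) / real r) - lam * p \<alpha> * W" using LHS[OF al] by simp
      have goal: "B * (1 + lam * \<xi> + (1 - lam) / real r) - lam * p \<alpha> * W \<ge> - s \<alpha>"
      proof (cases "r = 1")
        case True
        then have E1: "E = {\<alpha>}" using c unfolding r_def by (metis card_1_singletonE singletonD)
        have p1: "p \<alpha> = 1" using psum E1 by simp
        have x1: "\<xi> = 1" using xi c True by (simp add: \<xi>_def)
        have "lam * W \<le> 2 * B + s \<alpha>" using key True E1 by simp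
        then show ?thesis using p1 x1 True by (simp add: algebra_simps)
      next
        case False
        then have r2: "r \<ge> 2" using r1 by simp
        have x1: "\<xi> = (1 - p \<alpha>) / (real r - 1)" using xi c False by (simp add: \<xi>_def)
        have pb: "p \<alpha> * (lam * W + lam * B / (real r - 1)) \<le> Kc \<alpha>" using pbound[OF r2] c by blast
        have "B * (1 + lam * \<xi> + (1 - lam) / real r) - lam * p \<alpha> * W + s \<alpha>
            = Kc \<alpha> - p \<alpha> * (lam * W + lam * B / (real r - 1))"
          unfolding x1 Kc_def by (simp add: algebra_simps add_divide_distrib diff_divide_distrib)
        then show ?thesis using pb by simp
      qed
      show ?thesis using eq goal by (simp add: s_def sb_def)
    qed
  qed
  have final: "(\<forall>t\<in>Tba. x t \<ge> 0) \<and> (\<forall>t\<in>Tb. y t \<ge> 0)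
       \<and> (\<forall>i\<in>{1..m-1}. (\<Sum>t\<in>Ti i. x t) = z i)
       \<and> (\<Sum>t\<in>Tb. y t) = (\<Sum>t\<in>Tba. x t)
       \<and> (\<forall>\<alpha>\<in>C. \<alpha> \<noteq> b \<longrightarrow>
            (\<Sum>t\<in>Tb. y t * (1 - sigma w t \<alpha>))
              - (\<Sum>t\<in>Tba. x t * (sigma w t b - sigma w t \<alpha>))
            \<ge> score C w N \<alpha> - score C w N b)"
    using G1 G2 G3 G4 G5 by blast
  show ?thesis
    by (rule exI[of _ x], rule exI[of _ y]) (unfold Let_def, use final[unfolded Tb_def Ti_def Tba_def] in blast)
qed


end
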